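(* Consider problem $(\mathcal{P})$ under Assumptions A1 and A2, and let $\{x_k\},\{y_k\},\{d_k\}$ be generated by Algorithm BDCA (see context). Then for every $k$: (i) $\phi(y_k)\le \phi(x_k)-\rho\|d_k\|^2$; (ii) $\phi'(y_k;d_k)\le -\rho\|d_k\|^2$, where $\phi'(y;d)$ denotes the one-sided directional derivative; (iii) if $I(y_k)\subseteq I(x_k)$, then there exists $\delta_k>0$ such that for all $\lambda\in[0,\delta_k]$ one has $y_k+\lambda d_k\in\mathcal{F}$ and $\phi(y_k+\lambda d_k)\le \phi(y_k)-\alpha\lambda^2\|d_k\|^2$. Consequently, the backtracking loop of the algorithm terminates after finitely many reductions.
   Context: Problem $(\mathcal{P})$: minimize $\phi(x):=g(x)-h(x)$ subject to $x\in\mathcal{F}:=\{x\in\mathbb{R}^n:\langle a_i,x\rangle\le b_i,\ i=1,\dots,p\}$, where $g,h:\mathbb{R}^n\to\mathbb{R}\cup\{+\infty\}$ are proper, closed, convex, with conventions $(+\infty)-(+\infty)=+\infty$, $(+\infty)-\lambda=+\infty$, $\lambda-(+\infty)=-\infty$ for real $\lambda$. Assumption A1: $g$ and $h$ are strongly convex on their domains with the same parameter $\rho>0$ (i.e. $g-\frac\rho2\|\cdot\|^2$ and $h-\frac\rho2\|\cdot\|^2$ are convex). Assumption A2: $\partial h(x)\neq\emptyset$ for all $x\in\operatorname{dom}h$; $g$ is continuously differentiable on an open set containing $\operatorname{dom}h$; and $\inf_{x\in\mathcal{F}}\phi(x)>-\infty$. It is implicitly assumed that the iterates below are well defined (they lie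 in $\operatorname{dom}h$). For $\bar x\in\mathcal{F}$, $I(\bar x):=\{i:\langle a_i,\bar x\rangle=b_i\}$. Algorithm BDCA: input $x_0\in\mathcal{F}$, $\alpha>0$, $\beta\in(0,1)$. At iteration $k$: choose $u_k\in\partial h(x_k)$ and let $y_k$ be the unique minimizer of $g(x)-\langle u_k,x\rangle$ over $\mathcal{F}$; set $d_k:=y_k-x_k$; if $d_k=0$ stop and return $x_k$. If $I(y_k)\subseteq I(x_k)$: choose any $\bar\lambda_k\ge 0$, set $\lambda_k:=\bar\lambda_k$ and reduce it (to some value in $[0,\bar\lambda_k]$) so that $y_k+\lambda_kd_k\in\mathcal{F}$; then while $\phi(y_k+\lambda_kd_k)>\phi(y_k)-\alpha\lambda_k^2\|d_k\|^2$, replace $\lambda_k$ by $\beta\lambda_k$. Otherwise set $\lambda_k:=0$. Set $x_{k+1}:=y_k+\lambda_kd_k$ and continue with $k+1$. *)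

theory Defs
  imports "HOL-Analysis.Analysis" "HOL-Library.Extended_Real"
begin

text \<open>Isabelle's ereal subtraction satisfies exactly the paper's conventions:
  (+\<infinity>) - (+\<infinity>) = +\<infinity>, (+\<infinity>) - c = +\<infinity>, c - (+\<infinity>) = -\<infinity>.\<close>

definition edom :: "('a \<Rightarrow> ereal) \<Rightarrow> 'a set" where
  "edom f = {x. f x < \<infinity>}"

definition proper_fun :: "('a \<Rightarrow> ereal) \<Rightarrow> bool" where
  "proper_fun f \<longleftrightarrow> (\<forall>x. f x \<noteq> -\<infinity>) \<and> (\<exists>x. f x \<noteq> \<infinity>)"

definition epigraph :: "('a \<Rightarrow> ereal) \<Rightarrow> ('a \<times> real) set" where
  "epigraph f = {(x, t). f x \<le> ereal t}"

definition closed_fun :: "('a::topological_space \<Rightarrow> ereal) \<Rightarrow> bool" where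
  "closed_fun f \<longleftrightarrow> closed (epigraph f)"

definition convex_fun :: "('a::real_vector \<Rightarrow> ereal) \<Rightarrow> bool" where
  "convex_fun f \<longleftrightarrow> convex (epigraph f)"

definition strongly_convex_fun :: "('a::real_normed_vector \<Rightarrow> ereal) \<Rightarrow> real \<Rightarrow> bool" where
  "strongly_convex_fun f \<rho> \<longleftrightarrow> convex_fun (\<lambda>x. f x - ereal (\<rho> / 2 * (norm x)\<^sup>2))"

definition subdiff :: "('a::real_inner \<Rightarrow> ereal) \<Rightarrow> 'a \<Rightarrow> 'a set" where
  "subdiff f x = {v. \<forall>z. f x + ereal (v \<bullet> (z - x)) \<le> f z}"

definition C1_near :: "('a::real_inner \<Rightarrow> ereal) \<Rightarrow> 'a set \<Rightarrow> bool" where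
  "C1_near f S \<longleftrightarrow> (\<exists>U grad. open U \<and> S \<subseteq> U \<and> (\<forall>x\<in>U. \<bar>f x\<bar> \<noteq> \<infinity>) \<and>
      (\<forall>x\<in>U. ((\<lambda>z. real_of_ereal (f z)) has_derivative (\<lambda>v. grad x \<bullet> v)) (at x)) \<and>
      continuous_on U grad)"

definition phi :: "('a \<Rightarrow> ereal) \<Rightarrow> ('a \<Rightarrow> ereal) \<Rightarrow> 'a \<Rightarrow> ereal" where
  "phi g h x = g x - h x"

definition polyF :: "(nat \<Rightarrow> 'a::real_inner) \<Rightarrow> (nat \<Rightarrow> real) \<Rightarrow> nat \<Rightarrow> 'a set" where
  "polyF a b p = {x. \<forall>i<p. a i \<bullet> x \<le> b i}"

definition active :: "(nat \<Rightarrow> 'a::real_inner) \<Rightarrow> (nat \<Rightarrow> real) \<Rightarrow> nat \<Rightarrow> 'a \<Rightarrow> nat set" where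
  "active a b p x = {i. i < p \<and> a i \<bullet> x = b i}"

definition has_dir_deriv :: "('a::real_vector \<Rightarrow> ereal) \<Rightarrow> 'a \<Rightarrow> 'a \<Rightarrow> ereal \<Rightarrow> bool" where
  "has_dir_deriv f x v L \<longleftrightarrow>
     ((\<lambda>t::real. (f (x + t *\<^sub>R v) - f x) / ereal t) \<longlongrightarrow> L) (at_right 0)"

text \<open>One iteration k of BDCA (only required while the algorithm has not stopped).\<close>
definition bdca_iter ::
  "('a::real_inner \<Rightarrow> ereal) \<Rightarrow> ('a \<Rightarrow> ereal) \<Rightarrow> (nat \<Rightarrow> 'a) \<Rightarrow> (nat \<Rightarrow> real) \<Rightarrow> nat \<Rightarrow>
   real \<Rightarrow> real \<Rightarrow> (nat \<Rightarrow> 'a) \<Rightarrow> (nat \<Rightarrow> 'a) \<Rightarrow> (nat \<Rightarrow> 'a) \<Rightarrow> (nat \<Rightarrow> 'a) \<Rightarrow> (nat \<Rightarrow> real) \<Rightarrow>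
   nat \<Rightarrow> bool" where
  "bdca_iter g h a b p \<alpha> \<beta> x y d u lam k \<longleftrightarrow>
     x k \<in> edom h \<and> y k \<in> edom h \<and>
     u k \<in> subdiff h (x k) \<and>
     {z \<in> polyF a b p. \<forall>w\<in>polyF a b p. g z - ereal (u k \<bullet> z) \<le> g w - ereal (u k \<bullet> w)} = {y k} \<and>
     d k = y k - x k \<and>
     (d k \<noteq> 0 \<longrightarrow>
        x (Suc k) = y k + lam k *\<^sub>R d k \<and>
        (if active a b p (y k) \<subseteq> active a b p (x k) then
           (\<exists>lam0 n. lam0 \<ge> 0 \<and> y k + lam0 *\<^sub>R d k \<in> polyF a b p \<and> lam k = \<beta> ^ n * lam0 \<and>
              phi g h (y k + lam k *\<^sub>R d k) \<le> phi g h (y k) - ereal (\<alpha> * (lam k)\<^sup>2 * (norm (d k))\<^sup>2) \<and>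
              (\<forall>m<n. phi g h (y k + (\<beta> ^ m * lam0) *\<^sub>R d k) >
                        phi g h (y k) - ereal (\<alpha> * (\<beta> ^ m * lam0)\<^sup>2 * (norm (d k))\<^sup>2)))
         else lam k = 0))"

end

theory Submission
  imports Defs
begin

lemma norm_comb_id:
  fixes p q :: "'a::real_inner"
  assumes "a + b = 1"
  shows "a * (norm p)\<^sup>2 + b * (norm q)\<^sup>2 - (norm (a *\<^sub>R p + b *\<^sub>R q))\<^sup>2 = a * b * (norm (p - q))\<^sup>2"
proof -
  have b: "b = 1 - a" using assms by simp
  show ?thesis unfolding b power2_norm_eq_inner
    by (simp add: inner_add_left inner_add_right inner_diff_left inner_diff_right inner_commute algebra_simps power2_eq_square)
qed

lemma sc_ineq:
  fixes f :: "'a::real_inner \<Rightarrow> ereal"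
  assumes sc: "strongly_convex_fun f \<rho>" and fp: "f p = ereal fp" and fq: "f q = ereal fq"
    and ab: "0 \<le> a" "0 \<le> b" "a + b = 1"
  shows "f (a *\<^sub>R p + b *\<^sub>R q) \<le> ereal (a*fp + b*fq - \<rho>/2 * a * b * (norm (p - q))\<^sup>2)"
proof -
  define c where "c = (\<lambda>x::'a. \<rho> / 2 * (norm x)\<^sup>2)"
  define F where "F = (\<lambda>x. f x - ereal (c x))"
  have cv: "convex (epigraph F)" using sc unfolding strongly_convex_fun_def convex_fun_def F_def c_def by simp
  have P: "(p, fp - c p) \<in> epigraph F" unfolding epigraph_def F_def using fp by simp
  have Q: "(q, fq - c q) \<in> epigraph F" unfolding epigraph_def F_def using fq by simp
  have "a *\<^sub>R (p, fp - c p) + b *\<^sub>R (q, fq - c q) \<in> epigraph F"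
    using convexD[OF cv P Q ab] .
  then have "f (a *\<^sub>R p + b *\<^sub>R q) - ereal (c (a *\<^sub>R p + b *\<^sub>R q)) \<le> ereal (a * (fp - c p) + b * (fq - c q))"
    unfolding epigraph_def F_def by simp
  then have le: "f (a *\<^sub>R p + b *\<^sub>R q) \<le> ereal (a * (fp - c p) + b * (fq - c q) + c (a *\<^sub>R p + b *\<^sub>R q))"
    by (cases "f (a *\<^sub>R p + b *\<^sub>R q)") auto
  have "a * (fp - c p) + b * (fq - c q) + c (a *\<^sub>R p + b *\<^sub>R q)
      = a*fp + b*fq - \<rho>/2 * (a * (norm p)\<^sup>2 + b * (norm q)\<^sup>2 - (norm (a *\<^sub>R p + b *\<^sub>R q))\<^sup>2)"
    unfolding c_def by (simp add: algebra_simps)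
  also have "\<dots> = a*fp + b*fq - \<rho>/2 * a * b * (norm (p - q))\<^sup>2"
    by (subst norm_comb_id[OF ab(3)]) simp
  finally show ?thesis using le by simp
qed

lemma limit_le_aux:
  fixes c A :: real
  assumes "\<And>t. 0 < t \<Longrightarrow> t < 1 \<Longrightarrow> c * (1 - t) \<le> A"
  shows "c \<le> A"
proof -
  have "((\<lambda>t. c * (1 - t)) \<longlongrightarrow> c * (1 - 0)) (at_right (0::real))"
    by (intro tendsto_intros)
  moreover have "eventually (\<lambda>t. c * (1 - t) \<le> A) (at_right (0::real))"
    unfolding eventually_at_right_field using assms by (intro exI[of _ 1]) auto
  ultimately have "c * (1 - 0) \<le> A"
    by (intro tendsto_le[OF trivial_limit_at_right_real tendsto_const]) auto
  then show ?thesis by simp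
qed

lemma convex_polyF: "convex (polyF a b p)"
proof -
  have "polyF a b p = (\<Inter>i\<in>{..<p}. {x. a i \<bullet> x \<le> b i})"
    unfolding polyF_def by auto
  then show ?thesis by (auto intro!: convex_INT convex_halfspace_le)
qed

lemma dir_quot:
  fixes Gr :: "'a::real_inner \<Rightarrow> real"
  assumes "(Gr has_derivative (\<lambda>v. grad \<bullet> v)) (at Y)"
  shows "((\<lambda>t. (Gr (Y + t *\<^sub>R v) - Gr Y) / t) \<longlongrightarrow> grad \<bullet> v) (at_right 0)"
proof -
  have D1: "((\<lambda>t::real. Y + t *\<^sub>R v) has_derivative (\<lambda>t. t *\<^sub>R v)) (at 0)"
    by (auto intro!: derivative_eq_intros)
  have "(Gr has_derivative (\<lambda>v. grad \<bullet> v)) (at ((\<lambda>t::real. Y + t *\<^sub>R v) 0))" using assms by simp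
  from diff_chain_at[OF D1 this]
  have "((\<lambda>t. Gr (Y + t *\<^sub>R v)) has_derivative (\<lambda>t. t * (grad \<bullet> v))) (at 0)"
    by (simp add: o_def)
  then have "((\<lambda>t. Gr (Y + t *\<^sub>R v)) has_field_derivative grad \<bullet> v) (at 0)"
  proof -
    have eq: "(\<lambda>t. t * (grad \<bullet> v)) = (*) (grad \<bullet> v)" by (rule ext) simp
    show ?thesis unfolding has_field_derivative_def using \<open>((\<lambda>t. Gr (Y + t *\<^sub>R v)) has_derivative (\<lambda>t. t * (grad \<bullet> v))) (at 0)\<close> eq by simp
  qed
  then have "((\<lambda>t. (Gr (Y + t *\<^sub>R v) - Gr Y) / t) \<longlongrightarrow> grad \<bullet> v) (at 0)"
    unfolding has_field_derivative_iff by simp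
  then show ?thesis using filterlim_at_split by blast
qed

lemma line_tendsto: "((\<lambda>t::real. (Y::'a::real_normed_vector) + t *\<^sub>R v) \<longlongrightarrow> Y) (at_right 0)"
proof -
  have "((\<lambda>t::real. Y + t *\<^sub>R v) \<longlongrightarrow> Y + 0 *\<^sub>R v) (at_right 0)"
    by (intro tendsto_intros)
  then show ?thesis by simp
qed

lemma line_in_open: "open (U::'a::real_normed_vector set) \<Longrightarrow> Y \<in> U \<Longrightarrow> eventually (\<lambda>t::real. Y + t *\<^sub>R v \<in> U) (at_right 0)"
  using topological_tendstoD[OF line_tendsto] by blast

lemma aux_q: "(q::real) \<noteq> 0 \<Longrightarrow> (1/q) * (t/q) * (q * n)\<^sup>2 = t * n\<^sup>2"
  by (simp add: power2_eq_square field_simps)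

lemma aux_q2: "(q::real) \<noteq> 0 \<Longrightarrow> ((1/q) * A + (t/q) * B - c) * q = (A + t*B) - c*q"
  by (simp add: field_simps)

lemma dir_part:
  fixes g h :: "'a::real_inner \<Rightarrow> ereal"
  assumes U: "open U" "Y \<in> U" "\<forall>z\<in>U. \<bar>g z\<bar> \<noteq> \<infinity>"
    and gd: "((\<lambda>z. real_of_ereal (g z)) has_derivative (\<lambda>v. grad \<bullet> v)) (at Y)"
    and hsc: "strongly_convex_fun h \<rho>" and hp: "\<forall>z. h z \<noteq> -\<infinity>" and rho: "\<rho> > 0"
    and gY: "g Y = ereal gY" and hY: "h Y = ereal hY" and hX: "h X = ereal hX"
    and XD: "X = Y - D"
    and gi: "grad \<bullet> D \<le> V \<bullet> D"
    and hi: "V \<bullet> D + \<rho>/2 * (norm D)\<^sup>2 \<le> hY - hX"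
  shows "\<exists>L. has_dir_deriv (phi g h) Y D L \<and> L \<le> ereal (- \<rho> * (norm D)\<^sup>2)"
proof (cases "\<exists>t0>0. h (Y + t0 *\<^sub>R D) \<noteq> \<infinity>")
  case False
  have ev0: "eventually (\<lambda>t::real. 0 < t) (at_right 0)"
    by (auto simp: eventually_at_right_field intro!: exI[of _ 1])
  have "eventually (\<lambda>t. (phi g h (Y + t *\<^sub>R D) - phi g h Y) / ereal t = -\<infinity>) (at_right 0)"
    using eventually_conj[OF ev0 line_in_open[OF U(1,2), of D]]
  proof (rule eventually_mono)
    fix t :: real assume t: "0 < t \<and> Y + t *\<^sub>R D \<in> U"
    then have hinf: "h (Y + t *\<^sub>R D) = \<infinity>" using False by auto
    from t U(3) obtain r where "g (Y + t *\<^sub>R D) = ereal r" by (cases "g (Y + t *\<^sub>R D)") auto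
    then show "(phi g h (Y + t *\<^sub>R D) - phi g h Y) / ereal t = -\<infinity>"
      using hinf gY hY t unfolding phi_def by (simp add: divide_ereal_def)
  qed
  then have "has_dir_deriv (phi g h) Y D (-\<infinity>)"
    unfolding has_dir_deriv_def by (rule tendsto_eventually)
  then show ?thesis by (intro exI[of _ "-\<infinity>"]) simp
next
  case True
  then obtain t0 where t0: "t0 > 0" "h (Y + t0 *\<^sub>R D) \<noteq> \<infinity>" by auto
  then obtain H0 where H0: "h (Y + t0 *\<^sub>R D) = ereal H0" using hp by (cases "h (Y + t0 *\<^sub>R D)") auto
  define Hr where "Hr = (\<lambda>z. real_of_ereal (h z))"
  define Hq where "Hq = (\<lambda>t. (Hr (Y + t *\<^sub>R D) - hY) / t)"
  have comb: "(1 - s/t) *\<^sub>R Y + (s/t) *\<^sub>R (Y + t *\<^sub>R D) = Y + s *\<^sub>R D" if "t \<noteq> 0" for s t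
    using that by (simp add: algebra_simps)
  have hfin: "h (Y + t *\<^sub>R D) = ereal (Hr (Y + t *\<^sub>R D))" if "0 \<le> t" "t \<le> t0" for t
  proof -
    have "h ((1 - t/t0) *\<^sub>R Y + (t/t0) *\<^sub>R (Y + t0 *\<^sub>R D)) \<le> ereal ((1 - t/t0) * hY + (t/t0) * H0 - \<rho>/2 * (1 - t/t0) * (t/t0) * (norm (Y - (Y + t0 *\<^sub>R D)))\<^sup>2)"
      using that t0 by (intro sc_ineq[OF hsc hY H0]) auto
    then have "h (Y + t *\<^sub>R D) \<noteq> \<infinity>" using comb[of t0 t] t0 by auto
    then show ?thesis unfolding Hr_def using hp by (cases "h (Y + t *\<^sub>R D)") auto
  qed
  have hY': "Hr Y = hY" unfolding Hr_def using hY by simp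
  have mono: "Hq s \<le> Hq t" if "0 < s" "s \<le> t" "t \<le> t0" for s t
  proof -
    have "h ((1 - s/t) *\<^sub>R Y + (s/t) *\<^sub>R (Y + t *\<^sub>R D)) \<le> ereal ((1 - s/t) * hY + (s/t) * Hr (Y + t *\<^sub>R D) - \<rho>/2 * (1 - s/t) * (s/t) * (norm (Y - (Y + t *\<^sub>R D)))\<^sup>2)"
      using that by (intro sc_ineq[OF hsc hY hfin]) auto
    then have "Hr (Y + s *\<^sub>R D) \<le> (1 - s/t) * hY + (s/t) * Hr (Y + t *\<^sub>R D) - \<rho>/2 * (1 - s/t) * (s/t) * (norm (Y - (Y + t *\<^sub>R D)))\<^sup>2"
      using comb[of t s] that hfin[of s] by auto
    moreover have "0 \<le> \<rho>/2 * (1 - s/t) * (s/t) * (norm (Y - (Y + t *\<^sub>R D)))\<^sup>2"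
      using that rho by (intro mult_nonneg_nonneg) auto
    moreover have "(s/t) * (Hr (Y + t *\<^sub>R D) - hY) = (1 - s/t) * hY + (s/t) * Hr (Y + t *\<^sub>R D) - hY"
      by (simp add: algebra_simps)
    ultimately have "Hr (Y + s *\<^sub>R D) - hY \<le> (s/t) * (Hr (Y + t *\<^sub>R D) - hY)"
      by linarith
    then have "(Hr (Y + s *\<^sub>R D) - hY) / s \<le> (s/t) * (Hr (Y + t *\<^sub>R D) - hY) / s"
      using that by (intro divide_right_mono) auto
    then show ?thesis unfolding Hq_def using that by simp
  qed
  have bnd: "V \<bullet> D + \<rho> * (norm D)\<^sup>2 \<le> Hq t" if "0 < t" "t \<le> t0" for t
  proof -
    have e1: "(1/(1+t)) *\<^sub>R (Y + t *\<^sub>R D) + (t/(1+t)) *\<^sub>R X = Y"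
    proof -
      have s1: "1/(1+t) + t/(1+t) = 1" using that by (simp add: field_simps)
      have "(1/(1+t)) *\<^sub>R (Y + t *\<^sub>R D) + (t/(1+t)) *\<^sub>R X = (1/(1+t) + t/(1+t)) *\<^sub>R Y + ((1/(1+t))*t - t/(1+t)) *\<^sub>R D"
        unfolding XD by (simp add: algebra_simps)
      then show ?thesis using s1 by simp
    qed
    have e2: "norm ((Y + t *\<^sub>R D) - X) = (1+t) * norm D"
    proof -
      have "(Y + t *\<^sub>R D) - X = (1+t) *\<^sub>R D" unfolding XD by (simp add: algebra_simps)
      then show ?thesis using that by simp
    qed
    have "h ((1/(1+t)) *\<^sub>R (Y + t *\<^sub>R D) + (t/(1+t)) *\<^sub>R X) \<le> ereal ((1/(1+t)) * Hr (Y + t *\<^sub>R D) + (t/(1+t)) * hX - \<rho>/2 * (1/(1+t)) * (t/(1+t)) * (norm ((Y + t *\<^sub>R D) - X))\<^sup>2)"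
      using that by (intro sc_ineq[OF hsc hfin hX]) (auto simp: add_divide_distrib[symmetric])
    then have "hY \<le> (1/(1+t)) * Hr (Y + t *\<^sub>R D) + (t/(1+t)) * hX - \<rho>/2 * (1/(1+t)) * (t/(1+t)) * ((1+t) * norm D)\<^sup>2"
      using e1 e2 hY by simp
    also have "\<rho>/2 * (1/(1+t)) * (t/(1+t)) * ((1+t) * norm D)\<^sup>2 = \<rho>/2 * t * (norm D)\<^sup>2"
    proof -
      have nz: "1 + t \<noteq> 0" using that by simp
      have "(1/(1+t)) * (t/(1+t)) * ((1+t) * norm D)\<^sup>2 = t * (norm D)\<^sup>2"
        using nz aux_q by blast
      then show ?thesis by (metis mult.assoc)
    qed
    finally have fin: "hY \<le> (1/(1+t)) * Hr (Y + t *\<^sub>R D) + (t/(1+t)) * hX - \<rho>/2 * t * (norm D)\<^sup>2" .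
    have "hY * (1+t) \<le> ((1/(1+t)) * Hr (Y + t *\<^sub>R D) + (t/(1+t)) * hX - \<rho>/2 * t * (norm D)\<^sup>2) * (1+t)"
      using fin that by (intro mult_right_mono) auto
    also have "\<dots> = (Hr (Y + t *\<^sub>R D) + t * hX) - \<rho>/2 * t * (norm D)\<^sup>2 * (1+t)"
      by (rule aux_q2) (use that in simp)
    finally have "hY * (1+t) \<le> (Hr (Y + t *\<^sub>R D) + t * hX) - \<rho>/2 * t * (norm D)\<^sup>2 * (1+t)" .
    then have A: "t * (hY - hX) + \<rho>/2 * t * (1+t) * (norm D)\<^sup>2 \<le> Hr (Y + t *\<^sub>R D) - hY"
      by (simp add: algebra_simps)
    have B: "t * (V \<bullet> D + \<rho>/2 * (norm D)\<^sup>2) \<le> t * (hY - hX)"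
      using hi that by (intro mult_left_mono) auto
    have c0: "0 \<le> \<rho> * t * t * (norm D)\<^sup>2" using that rho by (intro mult_nonneg_nonneg) auto
    have c1: "\<rho>/2 * t * (1+t) * (norm D)\<^sup>2 = \<rho>/2 * t * (norm D)\<^sup>2 + \<rho> * t * t * (norm D)\<^sup>2 / 2"
      by (simp add: algebra_simps)
    have C: "\<rho>/2 * t * (norm D)\<^sup>2 \<le> \<rho>/2 * t * (1+t) * (norm D)\<^sup>2"
      using c0 c1 by linarith
    have "t * (V \<bullet> D + \<rho> * (norm D)\<^sup>2) \<le> Hr (Y + t *\<^sub>R D) - hY"
    proof -
      have "t * (V \<bullet> D + \<rho> * (norm D)\<^sup>2) = t * (V \<bullet> D + \<rho>/2 * (norm D)\<^sup>2) + \<rho>/2 * t * (norm D)\<^sup>2"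
        by (simp add: algebra_simps)
      then show ?thesis using A B C by linarith
    qed
    then show ?thesis unfolding Hq_def using that by (simp add: pos_le_divide_eq mult.commute)
  qed
  define m where "m = Inf (Hq ` ({0<..} \<inter> {..t0}))"
  have lim0: "(Hq \<longlongrightarrow> m) (at 0 within ({0<..} \<inter> {..t0}))"
    unfolding m_def
    by (rule Lim_right_bound[where K="V \<bullet> D + \<rho> * (norm D)\<^sup>2"]) (auto intro: mono bnd)
  have "at (0::real) within ({0<..} \<inter> {..t0}) = at 0 within {0<..}"
    by (rule at_within_nhd[where S="{..<t0}"]) (use t0 in auto)
  then have limH: "(Hq \<longlongrightarrow> m) (at_right 0)" using lim0 by simp
  have mK: "V \<bullet> D + \<rho> * (norm D)\<^sup>2 \<le> m"
    unfolding m_def using t0 by (intro cInf_greatest) (auto intro: bnd)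
  define Gr where "Gr = (\<lambda>z. real_of_ereal (g z))"
  have gY': "Gr Y = gY" unfolding Gr_def using gY by simp
  have limG: "((\<lambda>t. (Gr (Y + t *\<^sub>R D) - Gr Y) / t) \<longlongrightarrow> grad \<bullet> D) (at_right 0)"
    using dir_quot[OF gd[folded Gr_def]] .
  have limQ: "((\<lambda>t. ereal ((Gr (Y + t *\<^sub>R D) - Gr Y) / t - Hq t)) \<longlongrightarrow> ereal (grad \<bullet> D - m)) (at_right 0)"
    by (intro tendsto_intros limG limH)
  have ev0: "eventually (\<lambda>t::real. 0 < t \<and> t < t0) (at_right 0)"
    using t0 by (auto simp: eventually_at_right_field intro!: exI[of _ t0])
  have "eventually (\<lambda>t. ereal ((Gr (Y + t *\<^sub>R D) - Gr Y) / t - Hq t) = (phi g h (Y + t *\<^sub>R D) - phi g h Y) / ereal t) (at_right 0)"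
    using eventually_conj[OF ev0 line_in_open[OF U(1,2), of D]]
  proof (rule eventually_mono)
    fix t :: real assume t: "(0 < t \<and> t < t0) \<and> Y + t *\<^sub>R D \<in> U"
    from t U(3) have g1: "g (Y + t *\<^sub>R D) = ereal (Gr (Y + t *\<^sub>R D))"
      unfolding Gr_def by (cases "g (Y + t *\<^sub>R D)") auto
    have h1: "h (Y + t *\<^sub>R D) = ereal (Hr (Y + t *\<^sub>R D))" using hfin[of t] t by auto
    show "ereal ((Gr (Y + t *\<^sub>R D) - Gr Y) / t - Hq t) = (phi g h (Y + t *\<^sub>R D) - phi g h Y) / ereal t"
      unfolding phi_def g1 h1 gY hY Hq_def gY' using t by (simp add: diff_divide_distrib)
  qed
  then have "has_dir_deriv (phi g h) Y D (ereal (grad \<bullet> D - m))"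
    unfolding has_dir_deriv_def using limQ tendsto_cong by fastforce
  moreover have "ereal (grad \<bullet> D - m) \<le> ereal (- \<rho> * (norm D)\<^sup>2)" using gi mK by simp
  ultimately show ?thesis by blast
qed

lemma iii_part:
  fixes g h :: "'a::real_inner \<Rightarrow> ereal"
  assumes dd: "has_dir_deriv (phi g h) Y D L" "L \<le> ereal (-\<rho>*(norm D)\<^sup>2)"
    and D: "D \<noteq> 0" and rho: "\<rho> > 0" and al: "\<alpha> > 0"
    and pY: "phi g h Y = ereal P"
    and nontop: "eventually (\<lambda>t. phi g h (Y + t *\<^sub>R D) \<noteq> \<infinity>) (at_right 0)"
    and feas: "eventually (\<lambda>t. Y + t *\<^sub>R D \<in> S) (at_right 0)" and YS: "Y \<in> S"
  shows "\<exists>\<delta>>0. \<forall>t\<in>{0..\<delta>}. Y + t *\<^sub>R D \<in> S \<and>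
            phi g h (Y + t *\<^sub>R D) \<le> phi g h Y - ereal (\<alpha> * t\<^sup>2 * (norm D)\<^sup>2)"
proof -
  define c where "c = - \<rho> * (norm D)\<^sup>2 / 2"
  have n2: "(norm D)\<^sup>2 > 0" using D by simp
  have pos: "0 < \<rho> * (norm D)\<^sup>2" using n2 rho by simp
  have "L < ereal c"
  proof (cases L)
    case (real r)
    then have "r \<le> -\<rho>*(norm D)\<^sup>2" using dd(2) by simp
    then have "r < c" unfolding c_def using pos by linarith
    then show ?thesis using real by simp
  qed (use dd(2) in auto)
  then have evQ: "eventually (\<lambda>t. (phi g h (Y + t *\<^sub>R D) - phi g h Y) / ereal t < ereal c) (at_right 0)"
    using order_tendstoD(2)[OF dd(1)[unfolded has_dir_deriv_def]] by blast
  have evt: "eventually (\<lambda>t::real. 0 < t \<and> t < \<rho> / (2 * \<alpha>)) (at_right 0)"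
    using rho al by (auto simp: eventually_at_right_field intro!: exI[of _ "\<rho> / (2 * \<alpha>)"])
  have "eventually (\<lambda>t. ((0 < t \<and> t < \<rho> / (2 * \<alpha>)) \<and> (phi g h (Y + t *\<^sub>R D) - phi g h Y) / ereal t < ereal c)
        \<and> phi g h (Y + t *\<^sub>R D) \<noteq> \<infinity> \<and> Y + t *\<^sub>R D \<in> S) (at_right 0)"
    by (intro eventually_conj evt evQ nontop feas)
  then obtain bb where bb: "bb > 0" and P: "\<And>t. 0 < t \<Longrightarrow> t < bb \<Longrightarrow>
      ((0 < t \<and> t < \<rho> / (2 * \<alpha>)) \<and> (phi g h (Y + t *\<^sub>R D) - phi g h Y) / ereal t < ereal c)
        \<and> phi g h (Y + t *\<^sub>R D) \<noteq> \<infinity> \<and> Y + t *\<^sub>R D \<in> S"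
    unfolding eventually_at_right_field by auto
  show ?thesis
  proof (intro exI[of _ "bb/2"] conjI ballI)
    show "bb/2 > 0" using bb by simp
    fix t assume t: "t \<in> {0..bb/2}"
    show "Y + t *\<^sub>R D \<in> S"
    proof (cases "t = 0")
      case True then show ?thesis using YS by simp
    next
      case False then show ?thesis using P[of t] t bb by auto
    qed
    show "phi g h (Y + t *\<^sub>R D) \<le> phi g h Y - ereal (\<alpha> * t\<^sup>2 * (norm D)\<^sup>2)"
    proof (cases "t = 0")
      case True then show ?thesis using pY by simp
    next
      case False
      then have t0: "0 < t" "t < bb" using t bb by auto
      note Pt = P[OF t0]
      show ?thesis
      proof (cases "phi g h (Y + t *\<^sub>R D)")
        case (real v)
        then have "(v - P) / t < c" using Pt pY t0 by simp
        then have "v - P < c * t" using t0 by (simp add: pos_divide_less_eq)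
        moreover have "\<alpha> * t * (t * (norm D)\<^sup>2) \<le> (\<rho>/2) * (t * (norm D)\<^sup>2)"
        proof (rule mult_right_mono)
          have "t < \<rho> / (2 * \<alpha>)" using Pt by blast
          then have "\<alpha> * t < \<alpha> * (\<rho> / (2 * \<alpha>))" using al by (intro mult_strict_left_mono) auto
          then show "\<alpha> * t \<le> \<rho>/2" using al by simp
        qed (use t0 in simp)
        ultimately have "v \<le> P - \<alpha> * t\<^sup>2 * (norm D)\<^sup>2"
          unfolding c_def by (simp add: power2_eq_square algebra_simps)
        then show ?thesis using real pY by simp
      next
        case PInf then show ?thesis using Pt by simp
      next
        case MInf then show ?thesis by simp
      qed
    qed
  qed
qed

lemma xF:
  assumes iter: "\<And>k. (\<forall>j<k. d j \<noteq> 0) \<Longrightarrow> bdca_iter g h a b p \<alpha> \<beta> x y d u lam k"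
    and x0: "x 0 \<in> polyF a b p" and be: "0 < \<beta>" "\<beta> < 1"
  shows "(\<forall>j<k. d j \<noteq> 0) \<Longrightarrow> x k \<in> polyF a b p"
proof (induction k)
  case 0 then show ?case using x0 by simp
next
  case (Suc k)
  have run: "\<forall>j<k. d j \<noteq> 0" and dk: "d k \<noteq> 0" using Suc.prems by auto
  have it: "bdca_iter g h a b p \<alpha> \<beta> x y d u lam k" using iter run by blast
  have "y k \<in> {z \<in> polyF a b p. \<forall>w\<in>polyF a b p. g z - ereal (u k \<bullet> z) \<le> g w - ereal (u k \<bullet> w)}"
    using it unfolding bdca_iter_def by blast
  then have yF: "y k \<in> polyF a b p" by simp
  have xs: "x (Suc k) = y k + lam k *\<^sub>R d k" using it dk unfolding bdca_iter_def by blast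
  have A: "if active a b p (y k) \<subseteq> active a b p (x k) then
           (\<exists>lam0 n. lam0 \<ge> 0 \<and> y k + lam0 *\<^sub>R d k \<in> polyF a b p \<and> lam k = \<beta> ^ n * lam0 \<and>
              phi g h (y k + lam k *\<^sub>R d k) \<le> phi g h (y k) - ereal (\<alpha> * (lam k)\<^sup>2 * (norm (d k))\<^sup>2) \<and>
              (\<forall>m<n. phi g h (y k + (\<beta> ^ m * lam0) *\<^sub>R d k) >
                        phi g h (y k) - ereal (\<alpha> * (\<beta> ^ m * lam0)\<^sup>2 * (norm (d k))\<^sup>2)))
         else lam k = 0"
    using it dk unfolding bdca_iter_def by blast
  show ?case
  proof (cases "active a b p (y k) \<subseteq> active a b p (x k)")
    case True
    then obtain lam0 n where l: "lam0 \<ge> 0" "y k + lam0 *\<^sub>R d k \<in> polyF a b p" "lam k = \<beta> ^ n * lam0"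
      using A by auto
    have bn: "0 \<le> \<beta> ^ n" "\<beta> ^ n \<le> 1" using be by (auto intro: power_le_one)
    have "(1 - \<beta>^n) *\<^sub>R y k + \<beta>^n *\<^sub>R (y k + lam0 *\<^sub>R d k) \<in> polyF a b p"
      using bn by (intro convexD[OF convex_polyF yF l(2)]) auto
    moreover have "(1 - \<beta>^n) *\<^sub>R y k + \<beta>^n *\<^sub>R (y k + lam0 *\<^sub>R d k) = x (Suc k)"
      unfolding xs l(3) by (simp add: algebra_simps)
    ultimately show ?thesis by simp
  next
    case False
    then have "lam k = 0" using A by auto
    then show ?thesis using xs yF by simp
  qed
qed

theorem proposition3p2:
  fixes g h :: "'a::euclidean_space \<Rightarrow> ereal"
    and a :: "nat \<Rightarrow> 'a" and b :: "nat \<Rightarrow> real" and p :: nat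
    and \<rho> \<alpha> \<beta> :: real
    and x y d u :: "nat \<Rightarrow> 'a" and lam :: "nat \<Rightarrow> real"
  assumes g_pcc: "proper_fun g" "closed_fun g" "convex_fun g"
    and h_pcc: "proper_fun h" "closed_fun h" "convex_fun h"
    and A1: "\<rho> > 0" "strongly_convex_fun g \<rho>" "strongly_convex_fun h \<rho>"
    and A2: "\<forall>z\<in>edom h. subdiff h z \<noteq> {}" "C1_near g (edom h)"
            "(INF z\<in>polyF a b p. phi g h z) > -\<infinity>"
    and params: "\<alpha> > 0" "0 < \<beta>" "\<beta> < 1"
    and x0: "x 0 \<in> polyF a b p"
    and iter: "\<And>k. (\<forall>j<k. d j \<noteq> 0) \<Longrightarrow> bdca_iter g h a b p \<alpha> \<beta> x y d u lam k"
    and running: "\<forall>j<k. d j \<noteq> 0"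
  shows "phi g h (y k) \<le> phi g h (x k) - ereal (\<rho> * (norm (d k))\<^sup>2)
       \<and> (\<exists>L. has_dir_deriv (phi g h) (y k) (d k) L \<and> L \<le> ereal (- \<rho> * (norm (d k))\<^sup>2))
       \<and> (active a b p (y k) \<subseteq> active a b p (x k) \<longrightarrow>
            (\<exists>\<delta>>0. \<forall>t\<in>{0..\<delta>}. y k + t *\<^sub>R d k \<in> polyF a b p \<and>
                 phi g h (y k + t *\<^sub>R d k) \<le> phi g h (y k) - ereal (\<alpha> * t\<^sup>2 * (norm (d k))\<^sup>2))
          \<and> (\<forall>lam0\<ge>0. y k + lam0 *\<^sub>R d k \<in> polyF a b p \<longrightarrow>
               (\<exists>n. phi g h (y k + (\<beta> ^ n * lam0) *\<^sub>R d k)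
                      \<le> phi g h (y k) - ereal (\<alpha> * (\<beta> ^ n * lam0)\<^sup>2 * (norm (d k))\<^sup>2))))"
proof -
  have it: "bdca_iter g h a b p \<alpha> \<beta> x y d u lam k" using iter running by blast
  have XH: "x k \<in> edom h" and YH: "y k \<in> edom h" and Vsub: "u k \<in> subdiff h (x k)"
    and Dk: "d k = y k - x k"
    and ymem: "y k \<in> {z \<in> polyF a b p. \<forall>w\<in>polyF a b p. g z - ereal (u k \<bullet> z) \<le> g w - ereal (u k \<bullet> w)}"
    using it unfolding bdca_iter_def by auto
  have YF: "y k \<in> polyF a b p" and ymin: "\<And>w. w \<in> polyF a b p \<Longrightarrow> g (y k) - ereal (u k \<bullet> y k) \<le> g w - ereal (u k \<bullet> w)"
    using ymem by auto
  have XF: "x k \<in> polyF a b p" using xF[OF iter x0 params(2,3) running] .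
  obtain U grad where U: "open U" "edom h \<subseteq> U" "\<forall>z\<in>U. \<bar>g z\<bar> \<noteq> \<infinity>"
    and gder: "\<forall>z\<in>U. ((\<lambda>z. real_of_ereal (g z)) has_derivative (\<lambda>v. grad z \<bullet> v)) (at z)"
    using A2(2) unfolding C1_near_def by blast
  have hnm: "\<forall>z. h z \<noteq> -\<infinity>" using h_pcc(1) unfolding proper_fun_def by blast
  define X where "X = x k"
  define Y where "Y = y k"
  define D where "D = d k"
  define V where "V = u k"
  have XD: "X = Y - D" unfolding X_def Y_def D_def Dk by simp
  have YU: "Y \<in> U" and XU: "X \<in> U" using U(2) XH YH unfolding X_def Y_def by auto
  obtain gX where gX: "g X = ereal gX" using U(3) XU by (cases "g X") auto
  obtain gY where gY: "g Y = ereal gY" using U(3) YU by (cases "g Y") auto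
  obtain hX where hX: "h X = ereal hX" using XH hnm unfolding X_def edom_def by (cases "h (x k)") auto
  obtain hY where hY: "h Y = ereal hY" using YH hnm unfolding Y_def edom_def by (cases "h (y k)") auto
  have nD: "norm (Y - X) = norm D" "norm (X - Y) = norm D" unfolding XD by (auto simp: norm_minus_commute)
  (* strong convexity of g at minimiser *)
  have g1: "\<rho>/2 * (norm D)\<^sup>2 \<le> gX - gY + V \<bullet> D"
  proof (rule limit_le_aux)
    fix t :: real assume t: "0 < t" "t < 1"
    define z where "z = (1 - t) *\<^sub>R Y + t *\<^sub>R X"
    have zF: "z \<in> polyF a b p" unfolding z_def Y_def X_def using t
      by (intro convexD[OF convex_polyF YF XF]) auto
    have sc: "g z \<le> ereal ((1 - t) * gY + t * gX - \<rho>/2 * (1 - t) * t * (norm (Y - X))\<^sup>2)"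
      unfolding z_def using t by (intro sc_ineq[OF A1(2) gY gX]) auto
    have mn: "ereal (gY - V \<bullet> Y) \<le> g z - ereal (V \<bullet> z)"
      using ymin[OF zF] gY unfolding Y_def V_def by simp
    have R: "gY - V \<bullet> Y \<le> (1 - t) * gY + t * gX - \<rho>/2 * (1 - t) * t * (norm D)\<^sup>2 - V \<bullet> z"
      using sc mn nD by (cases "g z") auto
    have Vz: "V \<bullet> z = (1 - t) * (V \<bullet> Y) + t * (V \<bullet> X)" unfolding z_def by (simp add: inner_simps)
    have VD: "V \<bullet> D = V \<bullet> Y - V \<bullet> X" unfolding XD by (simp add: inner_simps)
    have E: "t * (gX - gY + V \<bullet> D) - t * (\<rho>/2 * (norm D)\<^sup>2 * (1 - t))
        = ((1 - t) * gY + t * gX - \<rho>/2 * (1 - t) * t * (norm D)\<^sup>2 - V \<bullet> z) - (gY - V \<bullet> Y)"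
      unfolding Vz VD by (simp add: algebra_simps)
    have "t * (\<rho>/2 * (norm D)\<^sup>2 * (1 - t)) \<le> t * (gX - gY + V \<bullet> D)" using E R by linarith
    then show "\<rho>/2 * (norm D)\<^sup>2 * (1 - t) \<le> gX - gY + V \<bullet> D" using t by simp
  qed
  have h1: "\<rho>/2 * (norm D)\<^sup>2 \<le> hY - hX - V \<bullet> D"
  proof (rule limit_le_aux)
    fix t :: real assume t: "0 < t" "t < 1"
    define z where "z = (1 - t) *\<^sub>R X + t *\<^sub>R Y"
    have sc: "h z \<le> ereal ((1 - t) * hX + t * hY - \<rho>/2 * (1 - t) * t * (norm (X - Y))\<^sup>2)"
      unfolding z_def using t by (intro sc_ineq[OF A1(3) hX hY]) auto
    have zX: "z - X = t *\<^sub>R D" unfolding z_def XD by (simp add: algebra_simps)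
    have sg: "h X + ereal (V \<bullet> (z - X)) \<le> h z"
      using Vsub unfolding subdiff_def X_def V_def by blast
    have R: "hX + t * (V \<bullet> D) \<le> (1 - t) * hX + t * hY - \<rho>/2 * (1 - t) * t * (norm D)\<^sup>2"
      using sc sg nD hX zX by (cases "h z") auto
    have E: "t * (hY - hX - V \<bullet> D) - t * (\<rho>/2 * (norm D)\<^sup>2 * (1 - t))
        = ((1 - t) * hX + t * hY - \<rho>/2 * (1 - t) * t * (norm D)\<^sup>2) - (hX + t * (V \<bullet> D))"
      by (simp add: algebra_simps)
    have "t * (\<rho>/2 * (norm D)\<^sup>2 * (1 - t)) \<le> t * (hY - hX - V \<bullet> D)" using E R by linarith
    then show "\<rho>/2 * (norm D)\<^sup>2 * (1 - t) \<le> hY - hX - V \<bullet> D" using t by simp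
  qed
  have part1: "phi g h Y \<le> phi g h X - ereal (\<rho> * (norm D)\<^sup>2)"
    unfolding phi_def using gX gY hX hY g1 h1 by simp
  (* first-order optimality *)
  define Gr where "Gr = (\<lambda>z. real_of_ereal (g z))"
  have gd: "(Gr has_derivative (\<lambda>v. grad Y \<bullet> v)) (at Y)" using gder YU unfolding Gr_def by blast
  have gi: "grad Y \<bullet> D \<le> V \<bullet> D"
  proof -
    have lim: "((\<lambda>t. (Gr (Y + t *\<^sub>R (-D)) - Gr Y) / t) \<longlongrightarrow> grad Y \<bullet> (-D)) (at_right 0)"
      by (rule dir_quot[OF gd])
    have ev0: "eventually (\<lambda>t::real. 0 < t \<and> t < 1) (at_right 0)"
      by (auto simp: eventually_at_right_field intro!: exI[of _ 1])
    have ev: "eventually (\<lambda>t. - (V \<bullet> D) \<le> (Gr (Y + t *\<^sub>R (-D)) - Gr Y) / t) (at_right 0)"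
      using eventually_conj[OF ev0 line_in_open[OF U(1) YU, of "-D"]]
    proof (rule eventually_mono)
      fix t :: real assume t: "(0 < t \<and> t < 1) \<and> Y + t *\<^sub>R (-D) \<in> U"
      have zeq: "Y + t *\<^sub>R (-D) = (1 - t) *\<^sub>R Y + t *\<^sub>R X" unfolding XD by (simp add: algebra_simps)
      have "(1 - t) *\<^sub>R Y + t *\<^sub>R X \<in> polyF a b p" unfolding Y_def X_def using t
        by (intro convexD[OF convex_polyF YF XF]) auto
      then have zF: "Y + t *\<^sub>R (-D) \<in> polyF a b p" using zeq by metis
      obtain r where r: "g (Y + t *\<^sub>R (-D)) = ereal r" using t U(3) by (cases "g (Y + t *\<^sub>R (-D))") auto
      have "ereal (gY - V \<bullet> Y) \<le> ereal (r - V \<bullet> (Y + t *\<^sub>R (-D)))"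
        using ymin[OF zF] gY r unfolding Y_def V_def by simp
      then have "gY - V \<bullet> Y \<le> r - V \<bullet> (Y + t *\<^sub>R (-D))" by simp
      then have "- t * (V \<bullet> D) \<le> r - gY" by (simp add: inner_simps)
      then have "- (V \<bullet> D) \<le> (r - gY) / t" using t by (simp add: pos_le_divide_eq mult.commute)
      then show "- (V \<bullet> D) \<le> (Gr (Y + t *\<^sub>R (-D)) - Gr Y) / t" using r gY unfolding Gr_def by simp
    qed
    have "- (V \<bullet> D) \<le> grad Y \<bullet> (-D)"
      by (rule tendsto_le[OF trivial_limit_at_right_real lim tendsto_const ev])
    then show ?thesis by simp
  qed
  have hi: "V \<bullet> D + \<rho>/2 * (norm D)\<^sup>2 \<le> hY - hX" using h1 by simp
  obtain L where L: "has_dir_deriv (phi g h) Y D L" "L \<le> ereal (- \<rho> * (norm D)\<^sup>2)"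
    using dir_part[OF U(1) YU U(3) gd[unfolded Gr_def] A1(3) hnm A1(1) gY hY hX XD gi hi] by blast
  have part3: "active a b p Y \<subseteq> active a b p X \<Longrightarrow>
      (\<exists>\<delta>>0. \<forall>t\<in>{0..\<delta>}. Y + t *\<^sub>R D \<in> polyF a b p \<and>
                 phi g h (Y + t *\<^sub>R D) \<le> phi g h Y - ereal (\<alpha> * t\<^sup>2 * (norm D)\<^sup>2))"
  proof (cases "D = 0")
    case True
    assume act: "active a b p Y \<subseteq> active a b p X"
    show ?thesis using True YF unfolding Y_def by (intro exI[of _ 1]) auto
  next
    case False
    assume act: "active a b p Y \<subseteq> active a b p X"
    have pY: "phi g h Y = ereal (gY - hY)" unfolding phi_def using gY hY by simp
    have nontop: "eventually (\<lambda>t. phi g h (Y + t *\<^sub>R D) \<noteq> \<infinity>) (at_right 0)"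
      using line_in_open[OF U(1) YU, of D]
    proof (rule eventually_mono)
      fix t :: real assume "Y + t *\<^sub>R D \<in> U"
      then obtain r where r: "g (Y + t *\<^sub>R D) = ereal r" using U(3) by (cases "g (Y + t *\<^sub>R D)") auto
      show "phi g h (Y + t *\<^sub>R D) \<noteq> \<infinity>" unfolding phi_def r using hnm
        by (cases "h (Y + t *\<^sub>R D)") auto
    qed
    have "eventually (\<lambda>t. \<forall>i\<in>{..<p}. a i \<bullet> (Y + t *\<^sub>R D) \<le> b i) (at_right 0)"
    proof (rule eventually_ball_finite)
      show "finite {..<p}" by simp
      show "\<forall>i\<in>{..<p}. eventually (\<lambda>t. a i \<bullet> (Y + t *\<^sub>R D) \<le> b i) (at_right 0)"
      proof
        fix i assume i: "i \<in> {..<p}"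
        show "eventually (\<lambda>t. a i \<bullet> (Y + t *\<^sub>R D) \<le> b i) (at_right 0)"
        proof (cases "a i \<bullet> Y = b i")
          case True
          then have "i \<in> active a b p X" using act i unfolding active_def by auto
          then have "a i \<bullet> X = b i" unfolding active_def by simp
          then have "a i \<bullet> D = 0" using True unfolding XD by (simp add: inner_simps)
          then show ?thesis using True by (simp add: inner_simps)
        next
          case False
          then have lt: "a i \<bullet> Y < b i" using YF i unfolding polyF_def Y_def by force
          have "((\<lambda>t. a i \<bullet> (Y + t *\<^sub>R D)) \<longlongrightarrow> a i \<bullet> Y) (at_right 0)"
            by (intro tendsto_inner tendsto_const line_tendsto)
          from order_tendstoD(2)[OF this lt] show ?thesis by (rule eventually_mono) simp
        qed
      qed
    qed
    then have feas: "eventually (\<lambda>t. Y + t *\<^sub>R D \<in> polyF a b p) (at_right 0)"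
      unfolding polyF_def by (rule eventually_mono) auto
    show ?thesis
      by (rule iii_part[OF L False A1(1) params(1) pY nontop feas]) (use YF Y_def in simp)
  qed
  show ?thesis
  proof (intro conjI impI)
    show "phi g h (y k) \<le> phi g h (x k) - ereal (\<rho> * (norm (d k))\<^sup>2)"
      using part1 unfolding X_def Y_def D_def .
    show "\<exists>L. has_dir_deriv (phi g h) (y k) (d k) L \<and> L \<le> ereal (- \<rho> * (norm (d k))\<^sup>2)"
      using L unfolding X_def Y_def D_def by blast
    assume act: "active a b p (y k) \<subseteq> active a b p (x k)"
    then obtain \<delta> where del: "\<delta> > 0" "\<forall>t\<in>{0..\<delta>}. Y + t *\<^sub>R D \<in> polyF a b p \<and>
                 phi g h (Y + t *\<^sub>R D) \<le> phi g h Y - ereal (\<alpha> * t\<^sup>2 * (norm D)\<^sup>2)"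
      using part3 unfolding X_def Y_def by blast
    then show "\<exists>\<delta>>0. \<forall>t\<in>{0..\<delta>}. y k + t *\<^sub>R d k \<in> polyF a b p \<and>
                 phi g h (y k + t *\<^sub>R d k) \<le> phi g h (y k) - ereal (\<alpha> * t\<^sup>2 * (norm (d k))\<^sup>2)"
      unfolding Y_def D_def by blast
    show "\<forall>lam0\<ge>0. y k + lam0 *\<^sub>R d k \<in> polyF a b p \<longrightarrow>
               (\<exists>n. phi g h (y k + (\<beta> ^ n * lam0) *\<^sub>R d k)
                      \<le> phi g h (y k) - ereal (\<alpha> * (\<beta> ^ n * lam0)\<^sup>2 * (norm (d k))\<^sup>2))"
    proof (intro allI impI)
      fix lam0 :: real assume l0: "lam0 \<ge> 0"
      obtain n where n: "\<beta> ^ n * lam0 \<le> \<delta>"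
      proof (cases "lam0 = 0")
        case True then show ?thesis using that[of 0] del(1) by simp
      next
        case False
        then have "lam0 > 0" using l0 by simp
        then obtain n where "\<beta> ^ n < \<delta> / lam0" using real_arch_pow_inv[of "\<delta> / lam0" \<beta>] del(1) params by auto
        then have "\<beta> ^ n * lam0 < \<delta>" using \<open>lam0 > 0\<close> by (simp add: pos_less_divide_eq)
        then show ?thesis using that[of n] by simp
      qed
      have "\<beta> ^ n * lam0 \<in> {0..\<delta>}" using n l0 params by simp
      then show "\<exists>n. phi g h (y k + (\<beta> ^ n * lam0) *\<^sub>R d k)
                      \<le> phi g h (y k) - ereal (\<alpha> * (\<beta> ^ n * lam0)\<^sup>2 * (norm (d k))\<^sup>2)"
        using del(2) unfolding Y_def D_def by blast
    qed
  qed
qed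

end
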